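(* In the setting below, $$N=\lim_{t\to\infty}(S+tP)^{-1}=\frac1\alpha Y-\frac{\ell}{\alpha(\alpha+\ell\gamma)}\,yy^\top.$$
   Context: Let $n\ge3$, $\ell>0$, $\alpha\ge(n-2)\ell$, $S=\alpha I_n+\ell\mathbf{1}_n\mathbf{1}_n^\top$. For a real matrix $P$, $\Delta_i(P)=|P_{ii}|-\sum_{j\ne i}|P_{ij}|$. A signless Laplacian is a real symmetric $n\times n$ matrix $P$ with $P_{ij}\in\{0,1\}$ for $i\ne j$, $P_{ii}\ge0$, and $\Delta_i(P)\in\{0,2\}$ for all $i$; its graph $G$ has vertex set $\{1,\dots,n\}$, an edge $\{i,j\}$ ($i\ne j$) whenever $P_{ij}=1$, and a self-loop $\{i,i\}$ whenever $\Delta_i(P)=2$ (graphs with self-loops are not bipartite). Relabel vertices so that the bipartite components $G_1,\dots,G_r$ come first, each occupying consecutive vertices with one bipartition class (size $p_i$) listed first and then the other (size $q_i$), and the remaining $s=n-\sum_{i=1}^r(p_i+q_i)$ vertices lie in non-bipartite components. Define $\gamma=\sum_{i=1}^r\frac{(p_i-q_i)^2}{p_i+q_i}$, $$y^\top=\Big(\tfrac{p_1-q_1}{p_1+q_1}(\mathbf{1}_{p_1}^\top,-\mathbf{1}_{q_1}^\top),\dots,\tfrac{p_r-q_r}{p_r+q_r}(\mathbf{1}_{p_r}^\top,-\mathbf{1}_{q_r}^\top),\,0\cdot\mathbf{1}_s^\top\Big),$$ and $Y$ the block-diagonal matrix with diagonal blocks $\frac{1}{p_i+q_i}\begin{pmatrix}\mathbf{1}_{p_i}\mathbf{1}_{p_i}^\top&-\mathbf{1}_{p_i}\mathbf{1}_{q_i}^\top\\-\mathbf{1}_{q_i}\mathbf{1}_{p_i}^\top&\mathbf{1}_{q_i}\mathbf{1}_{q_i}^\top\end{pmatrix}$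 for $i=1,\dots,r$, followed by the $s\times s$ zero block. *)

theory Defs
  imports Complex_Main "Jordan_Normal_Form.Matrix" "Jordan_Normal_Form.Gauss_Jordan_Elimination"
begin

text \<open>Matrices are n x n matrices of Jordan_Normal_Form, indices 0..n-1
  (vertex i of the paper is index i-1 here).\<close>

definition Delta :: "real mat \<Rightarrow> nat \<Rightarrow> real" where
  "Delta P i = \<bar>P $$ (i,i)\<bar> - (\<Sum>j\<in>{0..<dim_col P} - {i}. \<bar>P $$ (i,j)\<bar>)"

definition signless_laplacian :: "nat \<Rightarrow> real mat \<Rightarrow> bool" where
  "signless_laplacian n P \<longleftrightarrow> P \<in> carrier_mat n n \<and> P\<^sup>T = P \<and>
     (\<forall>i<n. \<forall>j<n. i \<noteq> j \<longrightarrow> P $$ (i,j) \<in> {0,1}) \<and>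
     (\<forall>i<n. P $$ (i,i) \<ge> 0) \<and> (\<forall>i<n. Delta P i \<in> {0,2})"

definition gadj :: "real mat \<Rightarrow> nat \<Rightarrow> nat \<Rightarrow> bool" where
  "gadj P i j \<longleftrightarrow> i < dim_row P \<and> j < dim_row P \<and> i \<noteq> j \<and> P $$ (i,j) = 1"

definition gloop :: "real mat \<Rightarrow> nat \<Rightarrow> bool" where
  "gloop P i \<longleftrightarrow> i < dim_row P \<and> Delta P i = 2"

definition gcomp :: "real mat \<Rightarrow> nat \<Rightarrow> nat set" where
  "gcomp P i = {j. j < dim_row P \<and> (gadj P)\<^sup>*\<^sup>* i j}"

definition bipartite_on :: "real mat \<Rightarrow> nat set \<Rightarrow> bool" where
  "bipartite_on P C \<longleftrightarrow> (\<forall>i\<in>C. \<not> gloop P i) \<and>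
     (\<exists>A. A \<subseteq> C \<and> (\<forall>i\<in>C. \<forall>j\<in>C. gadj P i j \<longrightarrow> (i \<in> A \<longleftrightarrow> j \<notin> A)))"

definition off :: "(nat \<Rightarrow> nat) \<Rightarrow> (nat \<Rightarrow> nat) \<Rightarrow> nat \<Rightarrow> nat" where
  "off p q k = (\<Sum>m<k. p m + q m)"

definition blk :: "(nat \<Rightarrow> nat) \<Rightarrow> (nat \<Rightarrow> nat) \<Rightarrow> nat \<Rightarrow> nat set" where
  "blk p q k = {off p q k ..< off p q k + p k + q k}"

text \<open>The labelling hypothesis: the bipartite components of G are exactly the blocks
  G_1..G_r, each listed with its class of size p_k first, then the class of size q_k;
  all remaining vertices lie in non-bipartite components.\<close>
definition bip_labelled :: "nat \<Rightarrow> real mat \<Rightarrow> nat \<Rightarrow> (nat \<Rightarrow> nat) \<Rightarrow> (nat \<Rightarrow> nat) \<Rightarrow> bool" where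
  "bip_labelled n P r p q \<longleftrightarrow> off p q r \<le> n \<and>
     (\<forall>k<r. p k + q k \<ge> 1 \<and>
        (\<forall>i\<in>blk p q k. gcomp P i = blk p q k) \<and>
        (\<forall>i\<in>blk p q k. \<not> gloop P i) \<and>
        (\<forall>i\<in>blk p q k. \<forall>j\<in>blk p q k. gadj P i j \<longrightarrow>
            (i < off p q k + p k \<longleftrightarrow> \<not> j < off p q k + p k))) \<and>
     (\<forall>i. off p q r \<le> i \<and> i < n \<longrightarrow> \<not> bipartite_on P (gcomp P i))"

definition gam :: "nat \<Rightarrow> (nat \<Rightarrow> nat) \<Rightarrow> (nat \<Rightarrow> nat) \<Rightarrow> real" where
  "gam r p q = (\<Sum>k<r. (real (p k) - real (q k))^2 / (real (p k) + real (q k)))"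

definition yv :: "nat \<Rightarrow> (nat \<Rightarrow> nat) \<Rightarrow> (nat \<Rightarrow> nat) \<Rightarrow> nat \<Rightarrow> real" where
  "yv r p q i = (\<Sum>k<r. if i \<in> blk p q k then
       (real (p k) - real (q k)) / (real (p k) + real (q k)) *
       (if i < off p q k + p k then 1 else -1) else 0)"

definition Ymat :: "nat \<Rightarrow> nat \<Rightarrow> (nat \<Rightarrow> nat) \<Rightarrow> (nat \<Rightarrow> nat) \<Rightarrow> real mat" where
  "Ymat n r p q = mat n n (\<lambda>(i,j). \<Sum>k<r. if i \<in> blk p q k \<and> j \<in> blk p q k then
       (if (i < off p q k + p k) = (j < off p q k + p k) then 1 else -1)
         / (real (p k) + real (q k)) else 0)"

definition yyT :: "nat \<Rightarrow> nat \<Rightarrow> (nat \<Rightarrow> nat) \<Rightarrow> (nat \<Rightarrow> nat) \<Rightarrow> real mat" where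
  "yyT n r p q = mat n n (\<lambda>(i,j). yv r p q i * yv r p q j)"

end

theory Submission
  imports Defs "Jordan_Normal_Form.Determinant"
begin

lemma mult_entry:
  assumes "A \<in> carrier_mat n m" "B \<in> carrier_mat m k" "i < n" "j < k"
  shows "(A * B) $$ (i,j) = (\<Sum>a<m. A $$ (i,a) * B $$ (a,j))"
  using assms by (auto simp: scalar_prod_def lessThan_atLeast0 intro!: sum.cong)

lemma mulv_entry:
  assumes "A \<in> carrier_mat n m" "v \<in> carrier_vec m" "i < n"
  shows "(A *\<^sub>v v) $ i = (\<Sum>a<m. A $$ (i,a) * v $ a)"
  using assms by (auto simp: scalar_prod_def lessThan_atLeast0 intro!: sum.cong)

definition qf :: "nat \<Rightarrow> real mat \<Rightarrow> (nat \<Rightarrow> real) \<Rightarrow> real" where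
  "qf n A x = (\<Sum>i<n. \<Sum>j<n. A $$ (i,j) * x i * x j)"

lemma inv_exists:
  assumes A: "(A :: real mat) \<in> carrier_mat n n"
    and inj: "\<And>x. (\<And>i. i < n \<Longrightarrow> (\<Sum>j<n. A $$ (i,j) * x j) = 0) \<Longrightarrow> (\<And>i. i < n \<Longrightarrow> x i = 0)"
  shows "\<exists>B. mat_inverse A = Some B \<and> A * B = 1\<^sub>m n \<and> B * A = 1\<^sub>m n \<and> B \<in> carrier_mat n n"
proof -
  have "det A \<noteq> 0"
  proof
    assume "det A = 0"
    then obtain v where v: "v \<in> carrier_vec n" "v \<noteq> 0\<^sub>v n" "A *\<^sub>v v = 0\<^sub>v n"
      using det_0_iff_vec_prod_zero[OF A] by auto
    have "\<And>i. i < n \<Longrightarrow> (\<Sum>j<n. A $$ (i,j) * v $ j) = 0"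
      using v mulv_entry[OF A v(1)] by (metis index_zero_vec(1))
    then have "\<And>i. i < n \<Longrightarrow> v $ i = 0" by (rule inj)
    then have "v = 0\<^sub>v n" using v(1) by (intro eq_vecI) auto
    with v(2) show False by simp
  qed
  then have U: "A \<in> Units (ring_mat TYPE(real) n n)" by (rule det_non_zero_imp_unit[OF A])
  show ?thesis
  proof (cases "mat_inverse A")
    case None
    then show ?thesis using mat_inverse(1)[OF A None, of n] U by simp
  next
    case (Some B)
    then show ?thesis using mat_inverse(2)[OF A Some] by auto
  qed
qed


lemma sum_single:
  assumes "finite A" "k \<in> A" "\<And>j. j \<in> A \<Longrightarrow> j \<noteq> k \<Longrightarrow> f j = 0"
  shows "sum f A = f k"
proof -
  have "sum f A = f k + sum f (A - {k})" using assms by (simp add: sum.remove)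
  also have "sum f (A - {k}) = 0" using assms by (intro sum.neutral) auto
  finally show ?thesis by simp
qed

lemma blk_disj:
  assumes "i \<in> blk p q k" "i \<in> blk p q k'" shows "k = k'"
proof (rule ccontr)
  assume ne: "k \<noteq> k'"
  have mono: "off p q (Suc a) \<le> off p q b" if "a < b" for a b
    using that unfolding off_def by (intro sum_mono2) auto
  have offS: "off p q (Suc a) = off p q a + p a + q a" for a unfolding off_def by simp
  show False
  proof (cases "k < k'")
    case True
    from mono[OF True] offS[of k] assms show False unfolding blk_def by auto
  next
    case False
    with ne have "k' < k" by simp
    from mono[OF this] offS[of k'] assms show False unfolding blk_def by auto
  qed
qed

lemma blk_le_off:
  assumes "i \<in> blk p q k" "k < r" shows "i < off p q r"
proof -
  have "off p q (Suc k) \<le> off p q r" using assms unfolding off_def by (intro sum_mono2) auto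
  moreover have "off p q (Suc k) = off p q k + p k + q k" unfolding off_def by simp
  ultimately show ?thesis using assms unfolding blk_def by auto
qed

lemma card_blk: "card (blk p q k) = p k + q k" unfolding blk_def by simp

definition sg :: "(nat \<Rightarrow> nat) \<Rightarrow> (nat \<Rightarrow> nat) \<Rightarrow> nat \<Rightarrow> nat \<Rightarrow> real" where
  "sg p q k i = (if i < off p q k + p k then 1 else -1)"

definition uu :: "(nat \<Rightarrow> nat) \<Rightarrow> (nat \<Rightarrow> nat) \<Rightarrow> nat \<Rightarrow> nat \<Rightarrow> real" where
  "uu p q k i = (if i \<in> blk p q k then sg p q k i else 0)"

definition sz :: "(nat \<Rightarrow> nat) \<Rightarrow> (nat \<Rightarrow> nat) \<Rightarrow> nat \<Rightarrow> real" where
  "sz p q k = real (p k) + real (q k)"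

lemma sg_sq[simp]: "sg p q k i * sg p q k i = 1" unfolding sg_def by auto


lemma cover: "i < off p q r \<Longrightarrow> \<exists>k<r. i \<in> blk p q k"
proof (induction r)
  case 0 then show ?case by (simp add: off_def)
next
  case (Suc r)
  have o: "off p q (Suc r) = off p q r + p r + q r" unfolding off_def by simp
  show ?case
  proof (cases "i < off p q r")
    case True then show ?thesis using Suc.IH by (meson less_Suc_eq)
  next
    case False then have "i \<in> blk p q r" using Suc.prems o unfolding blk_def by auto
    then show ?thesis by blast
  qed
qed


lemma qf_mult: assumes "A \<in> carrier_mat n n"
  shows "qf n A x = (\<Sum>i<n. x i * (\<Sum>j<n. A $$ (i,j) * x j))"
  unfolding qf_def by (simp add: sum_distrib_left mult_ac)

lemma qf_add: assumes "A \<in> carrier_mat n n" "B \<in> carrier_mat n n"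
  shows "qf n (A + B) x = qf n A x + qf n B x"
  unfolding qf_def using assms by (simp add: sum.distrib[symmetric] algebra_simps)

lemma qf_smult: assumes "A \<in> carrier_mat n n"
  shows "qf n (c \<cdot>\<^sub>m A) x = c * qf n A x"
  unfolding qf_def using assms by (simp add: sum_distrib_left mult_ac)

lemma qf_one: "qf n (1\<^sub>m n) x = (\<Sum>i<n. (x i)^2)"
proof -
  have "qf n (1\<^sub>m n) x = (\<Sum>i<n. \<Sum>j<n. if i = j then x i * x j else 0)"
    unfolding qf_def by (intro sum.cong refl) simp
  then show ?thesis by (simp add: power2_eq_square)
qed

lemma qf_J: "qf n (mat n n (\<lambda>_. 1)) x = (\<Sum>i<n. x i)^2"
  unfolding qf_def by (simp add: power2_eq_square sum_product mult_ac)

lemma mat_eq_sub: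
  assumes A: "(A :: real mat) \<in> carrier_mat n n" and B: "B \<in> carrier_mat n n" and e: "A + B = C"
  shows "B = C - A"
proof (rule eq_matI)
  fix i j assume "i < dim_row (C - A)" "j < dim_col (C - A)"
  then have i: "i < n" and j: "j < n" using A by auto
  have "C $$ (i,j) = A $$ (i,j) + B $$ (i,j)" unfolding e[symmetric] using A B i j by simp
  then show "B $$ (i,j) = (C - A) $$ (i,j)" using A i j by simp
qed (use A B e in auto)

lemma pd_inverse:
  assumes A: "(A :: real mat) \<in> carrier_mat n n" and c: "c > 0"
    and pd: "\<And>x. qf n A x \<ge> c * (\<Sum>i<n. (x i)^2)"
  shows "\<exists>B. mat_inverse A = Some B \<and> A * B = 1\<^sub>m n \<and> B * A = 1\<^sub>m n \<and> B \<in> carrier_mat n n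
            \<and> (\<forall>i<n. \<forall>j<n. \<bar>B $$ (i,j)\<bar> \<le> 1 / c)"
proof -
  have "\<exists>B. mat_inverse A = Some B \<and> A * B = 1\<^sub>m n \<and> B * A = 1\<^sub>m n \<and> B \<in> carrier_mat n n"
  proof (rule inv_exists[OF A])
    fix x assume h: "\<And>i. i < n \<Longrightarrow> (\<Sum>j<n. A $$ (i,j) * x j) = 0"
    have "qf n A x = 0" unfolding qf_mult[OF A] using h by simp
    then have "c * (\<Sum>i<n. (x i)^2) \<le> 0" using pd[of x] by simp
    then have s0: "(\<Sum>i<n. (x i)^2) = 0"
      using c by (metis mult_le_0_iff not_less order_antisym sum_nonneg zero_le_power2)
    fix i assume i: "i < n"
    from s0 have "(x i)^2 = 0" using i by (simp add: sum_nonneg_eq_0_iff)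
    then show "x i = 0" by simp
  qed
  then obtain B where B: "mat_inverse A = Some B" "A * B = 1\<^sub>m n" "B * A = 1\<^sub>m n" "B \<in> carrier_mat n n"
    by blast
  have bnd: "\<bar>B $$ (i,j)\<bar> \<le> 1 / c" if i: "i < n" and j: "j < n" for i j
  proof -
    define x where "x a = B $$ (a,j)" for a
    have Ax: "(\<Sum>a<n. A $$ (k,a) * x a) = (if k = j then 1 else 0)" if k: "k < n" for k
    proof -
      have "(A * B) $$ (k,j) = (\<Sum>a<n. A $$ (k,a) * B $$ (a,j))"
        by (rule mult_entry[OF A B(4) k j])
      then show ?thesis using B(2) k j by (simp add: x_def)
    qed
    have "qf n A x = (\<Sum>k<n. x k * (if k = j then 1 else 0))"
      unfolding qf_mult[OF A] using Ax by simp
    also have "\<dots> = x j" using j by (simp add: if_distrib cong: if_cong)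
    finally have q: "qf n A x = x j" .
    have le: "(x a)^2 \<le> (\<Sum>i<n. (x i)^2)" if "a < n" for a
      using that by (intro member_le_sum) auto
    have xj: "c * (x j)^2 \<le> \<bar>x j\<bar>" using pd[of x] q le[OF j] c
      by (smt (verit, best) mult_left_mono)
    have xj2: "\<bar>x j\<bar> \<le> 1 / c"
    proof (cases "x j = 0")
      case True then show ?thesis using c by simp
    next
      case False
      then have "c * \<bar>x j\<bar> * \<bar>x j\<bar> \<le> 1 * \<bar>x j\<bar>" using xj by (simp add: power2_eq_square abs_mult_self_eq mult.assoc)
      then have "c * \<bar>x j\<bar> \<le> 1" using False by (simp add: mult_le_cancel_right)
      then show ?thesis using c by (simp add: field_simps)
    qed
    have "c * (x i)^2 \<le> 1 / c" using pd[of x] q le[OF i] c xj2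
      by (smt (verit, best) mult_left_mono)
    then have "(x i)^2 \<le> (1/c)^2" using c by (simp add: field_simps power2_eq_square)
    then have "\<bar>x i\<bar> \<le> 1/c" using c by (metis abs_le_square_iff abs_of_pos zero_less_divide_1_iff)
    then show ?thesis by (simp add: x_def)
  qed
  show ?thesis using B bnd by blast
qed

locale setting =
  fixes n r :: nat and P :: "real mat" and p q :: "nat \<Rightarrow> nat"
  assumes sl: "signless_laplacian n P" and bl: "bip_labelled n P r p q"
begin

lemma P_carrier: "P \<in> carrier_mat n n" using sl unfolding signless_laplacian_def by auto
lemma dimP[simp]: "dim_row P = n" "dim_col P = n" using P_carrier by auto
lemma P_sym: "i < n \<Longrightarrow> j < n \<Longrightarrow> P $$ (j,i) = P $$ (i,j)"
  using sl unfolding signless_laplacian_def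
  by (metis index_transpose_mat(1) dimP)
lemma P_off: "i < n \<Longrightarrow> j < n \<Longrightarrow> i \<noteq> j \<Longrightarrow> P $$ (i,j) = 0 \<or> P $$ (i,j) = 1"
  using sl unfolding signless_laplacian_def by auto
lemma P_diag: "i < n \<Longrightarrow> P $$ (i,i) \<ge> 0"
  using sl unfolding signless_laplacian_def by auto
lemma Delta_02: "i < n \<Longrightarrow> Delta P i = 0 \<or> Delta P i = 2"
  using sl unfolding signless_laplacian_def by auto
lemma Delta_eq: "i < n \<Longrightarrow> Delta P i = P $$ (i,i) - (\<Sum>j\<in>{0..<n} - {i}. P $$ (i,j))"
proof -
  assume i: "i < n"
  have "(\<Sum>j\<in>{0..<n} - {i}. \<bar>P $$ (i,j)\<bar>) = (\<Sum>j\<in>{0..<n} - {i}. P $$ (i,j))"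
  proof (intro sum.cong refl)
    fix j assume "j \<in> {0..<n} - {i}"
    then show "\<bar>P $$ (i,j)\<bar> = P $$ (i,j)" using P_off[of i j] i by auto
  qed
  then show ?thesis unfolding Delta_def using P_diag[OF i] by simp
qed

lemma off_r: "off p q r \<le> n" using bl unfolding bip_labelled_def by auto
lemma sz_pos: "k < r \<Longrightarrow> sz p q k > 0" using bl unfolding bip_labelled_def sz_def by force
lemma comp_eq: "k < r \<Longrightarrow> i \<in> blk p q k \<Longrightarrow> gcomp P i = blk p q k"
  using bl unfolding bip_labelled_def by auto
lemma no_loop: "k < r \<Longrightarrow> i \<in> blk p q k \<Longrightarrow> \<not> gloop P i"
  using bl unfolding bip_labelled_def by auto
lemma sides: "k < r \<Longrightarrow> i \<in> blk p q k \<Longrightarrow> j \<in> blk p q k \<Longrightarrow> gadj P i j \<Longrightarrow>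
   (i < off p q k + p k \<longleftrightarrow> \<not> j < off p q k + p k)"
  using bl unfolding bip_labelled_def by auto
lemma nonbip: "off p q r \<le> i \<Longrightarrow> i < n \<Longrightarrow> \<not> bipartite_on P (gcomp P i)"
  using bl unfolding bip_labelled_def by auto
lemma blk_sub: "k < r \<Longrightarrow> blk p q k \<subseteq> {..<n}" using blk_le_off off_r by fastforce

lemma gadj_sym: "gadj P i j \<Longrightarrow> gadj P j i" unfolding gadj_def using P_sym by auto

lemma qf_P:
  "qf n P x = (\<Sum>i<n. Delta P i * (x i)^2) +
     (\<Sum>i<n. \<Sum>j<n. if i \<noteq> j then P $$ (i,j) * (x i + x j)^2 else 0) / 2"
proof -
  define E where "E = (\<Sum>i<n. \<Sum>j<n. if i \<noteq> j then P $$ (i,j) * (x i + x j)^2 else 0)"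
  define A where "A = (\<Sum>i<n. \<Sum>j<n. if i \<noteq> j then P $$ (i,j) * (x i)^2 else 0)"
  define B where "B = (\<Sum>i<n. \<Sum>j<n. if i \<noteq> j then P $$ (i,j) * (x j)^2 else 0)"
  define C where "C = (\<Sum>i<n. \<Sum>j<n. if i \<noteq> j then P $$ (i,j) * x i * x j else 0)"
  have E: "E = A + B + 2 * C" unfolding E_def A_def B_def C_def
    by (simp add: sum.distrib[symmetric] sum_distrib_left power2_eq_square algebra_simps if_distrib cong: if_cong)
  have "B = (\<Sum>j<n. \<Sum>i<n. if i \<noteq> j then P $$ (i,j) * (x j)^2 else 0)"
    unfolding B_def by (rule sum.swap)
  also have "\<dots> = A" unfolding A_def
    by (intro sum.cong refl) (auto simp: P_sym)
  finally have BA: "B = A" .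
  have rowsum: "(\<Sum>j<n. if i \<noteq> j then P $$ (i,j) else 0) = P $$ (i,i) - Delta P i" if "i < n" for i
  proof -
    have "(\<Sum>j<n. if i \<noteq> j then P $$ (i,j) else 0) = (\<Sum>j\<in>{0..<n} - {i}. P $$ (i,j))"
      by (subst sum.If_cases) (auto simp: lessThan_atLeast0 intro!: sum.cong)
    then show ?thesis using Delta_eq[OF that] by simp
  qed
  have A: "A = (\<Sum>i<n. (P $$ (i,i) - Delta P i) * (x i)^2)"
    unfolding A_def
  proof (intro sum.cong refl)
    fix i assume "i \<in> {..<n}"
    have "(\<Sum>j<n. if i \<noteq> j then P $$ (i,j) * (x i)^2 else 0) = (\<Sum>j<n. if i \<noteq> j then P $$ (i,j) else 0) * (x i)^2"
      by (subst sum_distrib_right) (auto intro!: sum.cong)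
    then show "(\<Sum>j<n. if i \<noteq> j then P $$ (i,j) * (x i)^2 else 0) = (P $$ (i,i) - Delta P i) * (x i)^2"
      using rowsum \<open>i \<in> {..<n}\<close> by simp
  qed
  have Q: "qf n P x = (\<Sum>i<n. P $$ (i,i) * (x i)^2) + C"
  proof -
    have "qf n P x = (\<Sum>i<n. P $$ (i,i) * (x i)^2 + (\<Sum>j<n. if i \<noteq> j then P $$ (i,j) * x i * x j else 0))"
      unfolding qf_def
    proof (intro sum.cong refl)
      fix i assume i: "i \<in> {..<n}"
      have "(\<Sum>j<n. P $$ (i,j) * x i * x j) = (\<Sum>j<n. (if j = i then P $$ (i,i) * (x i)^2 else 0) + (if i \<noteq> j then P $$ (i,j) * x i * x j else 0))"
        by (intro sum.cong refl) (auto simp: power2_eq_square)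
      also have "\<dots> = P $$ (i,i) * (x i)^2 + (\<Sum>j<n. if i \<noteq> j then P $$ (i,j) * x i * x j else 0)"
        using i by (simp add: sum.distrib)
      finally show "(\<Sum>j<n. P $$ (i,j) * x i * x j) = P $$ (i,i) * (x i)^2 + (\<Sum>j<n. if i \<noteq> j then P $$ (i,j) * x i * x j else 0)" .
    qed
    then show ?thesis unfolding C_def by (simp add: sum.distrib)
  qed
  show ?thesis unfolding E_def[symmetric] using E BA A Q
    by (simp add: sum_subtractf left_diff_distrib field_simps)
qed

lemma qf_P_nonneg: "qf n P x \<ge> 0"
proof -
  have "(\<Sum>i<n. Delta P i * (x i)^2) \<ge> 0"
    by (intro sum_nonneg) (use Delta_02 in force)
  moreover have "(\<Sum>i<n. \<Sum>j<n. if i \<noteq> j then P $$ (i,j) * (x i + x j)^2 else 0) \<ge> 0"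
    by (intro sum_nonneg) (use P_off in force)
  ultimately show ?thesis by (simp add: qf_P)
qed

lemma qf_P_zero:
  assumes "qf n P x = 0"
  shows "\<And>i. gloop P i \<Longrightarrow> x i = 0" and "\<And>i j. gadj P i j \<Longrightarrow> x i + x j = 0"
proof -
  have t1: "\<forall>i\<in>{..<n}. 0 \<le> Delta P i * (x i)^2" using Delta_02 by force
  have t2: "\<forall>i\<in>{..<n}. 0 \<le> (\<Sum>j<n. if i \<noteq> j then P $$ (i,j) * (x i + x j)^2 else 0)"
    using P_off by (force intro: sum_nonneg)
  have s1: "(\<Sum>i<n. Delta P i * (x i)^2) = 0" and
       s2: "(\<Sum>i<n. \<Sum>j<n. if i \<noteq> j then P $$ (i,j) * (x i + x j)^2 else 0) = 0"
  proof -
    have a: "(\<Sum>i<n. Delta P i * (x i)^2) \<ge> 0" by (rule sum_nonneg) (use t1 in blast)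
    have b: "(\<Sum>i<n. \<Sum>j<n. if i \<noteq> j then P $$ (i,j) * (x i + x j)^2 else 0) \<ge> 0"
      by (rule sum_nonneg) (use t2 in blast)
    show "(\<Sum>i<n. Delta P i * (x i)^2) = 0" using a b assms qf_P[of x] by linarith
    show "(\<Sum>i<n. \<Sum>j<n. if i \<noteq> j then P $$ (i,j) * (x i + x j)^2 else 0) = 0" using a b assms qf_P[of x] by linarith
  qed
  {
    fix i assume "gloop P i"
    then have i: "i < n" "Delta P i = 2" unfolding gloop_def by auto
    have "Delta P i * (x i)^2 = 0"
      using sum_nonneg_eq_0_iff[of "{..<n}" "\<lambda>i. Delta P i * (x i)^2"] s1 t1 i by force
    with i show "x i = 0" by simp
  }
  {
    fix i j assume "gadj P i j"
    then have g: "i < n" "j < n" "i \<noteq> j" "P $$ (i,j) = 1" unfolding gadj_def by auto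
    have "(\<Sum>j<n. if i \<noteq> j then P $$ (i,j) * (x i + x j)^2 else 0) = 0"
      using sum_nonneg_eq_0_iff[of "{..<n}" "\<lambda>i. (\<Sum>j<n. if i \<noteq> j then P $$ (i,j) * (x i + x j)^2 else 0)"] s2 t2 g by auto
    moreover have "\<forall>j\<in>{..<n}. 0 \<le> (if i \<noteq> j then P $$ (i,j) * (x i + x j)^2 else 0)"
      using P_off g by force
    ultimately have "\<forall>j'\<in>{..<n}. (if i \<noteq> j' then P $$ (i,j') * (x i + x j')^2 else 0) = 0"
      using sum_nonneg_eq_0_iff[of "{..<n}" "\<lambda>j. (if i \<noteq> j then P $$ (i,j) * (x i + x j)^2 else 0)"] by blast
    then have "(if i \<noteq> j then P $$ (i,j) * (x i + x j)^2 else 0) = 0" using g(2) by blast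
    with g show "x i + x j = 0" by simp
  }
qed

lemma reach_sign:
  assumes x: "qf n P x = 0" and k: "k < r" "i \<in> blk p q k" and R: "(gadj P)\<^sup>*\<^sup>* i j"
  shows "j \<in> blk p q k \<and> sg p q k j * x j = sg p q k i * x i"
  using R
proof (induction rule: rtranclp_induct)
  case base then show ?case using k by simp
next
  case (step j j')
  then have j: "j \<in> blk p q k" and e: "sg p q k j * x j = sg p q k i * x i" by auto
  have "j' \<in> gcomp P j" using step(2) unfolding gcomp_def gadj_def by auto
  then have j': "j' \<in> blk p q k" using comp_eq[OF k(1) j] by simp
  have side: "(j < off p q k + p k \<longleftrightarrow> \<not> j' < off p q k + p k)" using sides[OF k(1) j j' step(2)] .
  have "x j + x j' = 0" using qf_P_zero(2)[OF x step(2)] .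
  then show ?case using j' e side unfolding sg_def by (auto split: if_splits)
qed

lemma reach_pm:
  assumes x: "qf n P x = 0" and R: "(gadj P)\<^sup>*\<^sup>* i j"
  shows "x j = x i \<or> x j = - x i"
  using R
proof (induction rule: rtranclp_induct)
  case base then show ?case by simp
next
  case (step j j')
  have "x j + x j' = 0" using qf_P_zero(2)[OF x step(2)] .
  then show ?case using step(3) by auto
qed

lemma sum_uu: "k < r \<Longrightarrow> (\<Sum>a<n. uu p q k a * f a) = (\<Sum>a\<in>blk p q k. sg p q k a * f a)"
proof -
  assume k: "k < r"
  have "(\<Sum>a<n. uu p q k a * f a) = (\<Sum>a<n. if a \<in> blk p q k then sg p q k a * f a else 0)"
    unfolding uu_def by (intro sum.cong refl) auto
  also have "\<dots> = (\<Sum>a\<in>{..<n} \<inter> blk p q k. sg p q k a * f a)"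
    by (simp add: sum.inter_restrict)
  also have "{..<n} \<inter> blk p q k = blk p q k" using blk_sub[OF k] by auto
  finally show ?thesis .
qed

lemma outside_zero:
  assumes x: "qf n P x = 0" and i: "i < n" "off p q r \<le> i"
  shows "x i = 0"
proof (rule ccontr)
  assume xi: "x i \<noteq> 0"
  define C where "C = gcomp P i"
  have pm: "x j = x i \<or> x j = - x i" if "j \<in> C" for j
    using reach_pm[OF x] that unfolding C_def gcomp_def by auto
  have nl: "\<forall>j\<in>C. \<not> gloop P j"
  proof
    fix j assume j: "j \<in> C"
    show "\<not> gloop P j"
    proof
      assume "gloop P j"
      then have "x j = 0" using qf_P_zero(1)[OF x] by blast
      with pm[OF j] xi show False by auto
    qed
  qed
  have col: "\<forall>j\<in>C. \<forall>j'\<in>C. gadj P j j' \<longrightarrow> (j \<in> {j \<in> C. x j = x i}) = (j' \<notin> {j \<in> C. x j = x i})"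
  proof (intro ballI impI)
    fix j j' assume j: "j \<in> C" and j': "j' \<in> C" and e: "gadj P j j'"
    have "x j + x j' = 0" using qf_P_zero(2)[OF x e] .
    then show "(j \<in> {j \<in> C. x j = x i}) = (j' \<notin> {j \<in> C. x j = x i})"
      using pm[OF j] pm[OF j'] j j' xi by auto
  qed
  have "bipartite_on P C"
    unfolding bipartite_on_def using nl col by blast
  with nonbip[OF i(2) i(1)] show False unfolding C_def by simp
qed

lemma kernel:
  assumes x: "qf n P x = 0" and i: "i < n"
  shows "x i = (\<Sum>k<r. uu p q k i * (\<Sum>a<n. uu p q k a * x a) / sz p q k)"
proof (cases "\<exists>k<r. i \<in> blk p q k")
  case True
  then obtain k where k: "k < r" "i \<in> blk p q k" by blast
  have "(\<Sum>a<n. uu p q k a * x a) = (\<Sum>a\<in>blk p q k. sg p q k i * x i)"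
    unfolding sum_uu[OF k(1)]
  proof (intro sum.cong refl)
    fix a assume a: "a \<in> blk p q k"
    then have "a \<in> gcomp P i" using comp_eq[OF k] by simp
    then have "(gadj P)\<^sup>*\<^sup>* i a" unfolding gcomp_def by simp
    then show "sg p q k a * x a = sg p q k i * x i" using reach_sign[OF x k] by blast
  qed
  also have "\<dots> = sz p q k * (sg p q k i * x i)" by (simp add: card_blk sz_def)
  finally have s: "(\<Sum>a<n. uu p q k a * x a) = sz p q k * (sg p q k i * x i)" .
  have "(\<Sum>k'<r. uu p q k' i * (\<Sum>a<n. uu p q k' a * x a) / sz p q k') =
      uu p q k i * (\<Sum>a<n. uu p q k a * x a) / sz p q k"
    by (rule sum_single) (use k blk_disj in \<open>auto simp: uu_def\<close>)
  also have "\<dots> = x i" using s k sz_pos[OF k(1)] by (simp add: uu_def)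
  finally show ?thesis by simp
next
  case False
  then have "off p q r \<le> i" using cover[of i p q r] by (meson not_le)
  then have "x i = 0" using outside_zero[OF x i] by simp
  moreover have "\<forall>k<r. uu p q k i = 0" using False by (auto simp: uu_def)
  ultimately show ?thesis by simp
qed

lemma P_uu: assumes k: "k < r" and i: "i < n" shows "(\<Sum>j<n. P $$ (i,j) * uu p q k j) = 0"
proof -
  have split: "(\<Sum>j<n. P $$ (i,j) * uu p q k j) = P $$ (i,i) * uu p q k i + (\<Sum>j\<in>{0..<n} - {i}. P $$ (i,j) * uu p q k j)"
    using i by (simp add: lessThan_atLeast0 sum.remove)
  show ?thesis
  proof (cases "i \<in> blk p q k")
    case True
    have nb: "P $$ (i,j) * uu p q k j = P $$ (i,j) * (- sg p q k i)" if j: "j \<in> {0..<n} - {i}" for j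
    proof (cases "P $$ (i,j) = 1")
      case True
      then have e: "gadj P i j" using j i unfolding gadj_def by auto
      then have "j \<in> gcomp P i" unfolding gcomp_def gadj_def by auto
      then have jb: "j \<in> blk p q k" using comp_eq[OF k \<open>i \<in> blk p q k\<close>] by simp
      have "(i < off p q k + p k \<longleftrightarrow> \<not> j < off p q k + p k)" using sides[OF k \<open>i \<in> blk p q k\<close> jb e] .
      then show ?thesis using jb unfolding uu_def sg_def by auto
    next
      case False then have "P $$ (i,j) = 0" using P_off[of i j] i j by auto
      then show ?thesis by simp
    qed
    have "Delta P i = 0" using Delta_02[OF i] no_loop[OF k True] i unfolding gloop_def by auto
    then have h1: "(\<Sum>j\<in>{0..<n} - {i}. P $$ (i,j)) = P $$ (i,i)" using Delta_eq[OF i] by simp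
    have h2: "(\<Sum>j\<in>{0..<n} - {i}. P $$ (i,j) * uu p q k j) = (\<Sum>j\<in>{0..<n} - {i}. P $$ (i,j) * (- sg p q k i))"
      by (rule sum.cong[OF refl nb])
    have h3: "(\<Sum>j\<in>{0..<n} - {i}. P $$ (i,j) * (- sg p q k i)) = (\<Sum>j\<in>{0..<n} - {i}. P $$ (i,j)) * (- sg p q k i)"
      by (rule sum_distrib_right[symmetric])
    have h4: "(\<Sum>j\<in>{0..<n} - {i}. P $$ (i,j) * uu p q k j) = - (P $$ (i,i) * sg p q k i)"
      unfolding h2 h3 h1 by (rule mult_minus_right)
    have h5: "uu p q k i = sg p q k i" using True by (simp add: uu_def)
    show ?thesis unfolding split h4 h5 by (rule add_eq_0_iff2[THEN iffD2]) simp
  next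
    case False
    have "P $$ (i,j) * uu p q k j = 0" if j: "j \<in> {0..<n} - {i}" for j
    proof (cases "P $$ (i,j) = 1")
      case True
      then have "gadj P i j" using j i unfolding gadj_def by auto
      then have e: "gadj P j i" by (rule gadj_sym)
      show ?thesis
      proof (cases "j \<in> blk p q k")
        case True
        then have "i \<in> gcomp P j" using e unfolding gcomp_def gadj_def by auto
        then have "i \<in> blk p q k" using comp_eq[OF k True] by simp
        with False show ?thesis by simp
      qed (simp add: uu_def)
    next
      case False then have "P $$ (i,j) = 0" using P_off[of i j] i j by auto
      then show ?thesis by simp
    qed
    then have h6: "(\<Sum>j\<in>{0..<n} - {i}. P $$ (i,j) * uu p q k j) = 0" by (intro sum.neutral) blast
    have h7: "uu p q k i = 0" using False by (simp add: uu_def)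
    show ?thesis unfolding split h6 h7 by simp
  qed
qed

lemma sum_u: assumes k: "k < r" shows "(\<Sum>a<n. uu p q k a) = real (p k) - real (q k)"
proof -
  define ofs where "ofs = off p q k"
  have "(\<Sum>a<n. uu p q k a) = (\<Sum>a\<in>blk p q k. sg p q k a * 1)" using sum_uu[OF k, of "\<lambda>_. 1"] by simp
  also have "\<dots> = (\<Sum>a\<in>{ofs..<ofs + p k}. sg p q k a) + (\<Sum>a\<in>{ofs + p k..<ofs + p k + q k}. sg p q k a)"
    unfolding blk_def ofs_def[symmetric] by (simp add: sum.atLeastLessThan_concat)
  also have "(\<Sum>a\<in>{ofs..<ofs + p k}. sg p q k a) = (\<Sum>a\<in>{ofs..<ofs + p k}. 1)"
    by (intro sum.cong refl) (auto simp: sg_def ofs_def)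
  also have "(\<Sum>a\<in>{ofs + p k..<ofs + p k + q k}. sg p q k a) = (\<Sum>a\<in>{ofs + p k..<ofs + p k + q k}. -1)"
    by (intro sum.cong refl) (auto simp: sg_def ofs_def)
  finally show ?thesis by simp
qed

lemma ortho: assumes k: "k < r" and k': "k' < r"
  shows "(\<Sum>a<n. uu p q k a * uu p q k' a) = (if k = k' then sz p q k else 0)"
proof (cases "k = k'")
  case True
  have "(\<Sum>a<n. uu p q k a * uu p q k' a) = (\<Sum>a\<in>blk p q k. sg p q k a * uu p q k a)"
    using True sum_uu[OF k, of "uu p q k"] by simp
  also have "\<dots> = (\<Sum>a\<in>blk p q k. 1)" by (intro sum.cong refl) (auto simp: uu_def)
  finally show ?thesis using True by (simp add: card_blk sz_def)
next
  case False
  have "uu p q k a * uu p q k' a = 0" for a using blk_disj[of a p q k k'] False by (auto simp: uu_def)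
  then show ?thesis using False by (auto intro!: sum.neutral)
qed

definition YY where "YY = Ymat n r p q"
definition JJ where "JJ = (mat n n (\<lambda>_. 1) :: real mat)"

lemma YY_carrier[simp]: "YY \<in> carrier_mat n n" unfolding YY_def Ymat_def by simp
lemma JJ_carrier[simp]: "JJ \<in> carrier_mat n n" unfolding JJ_def by simp

lemma dim_YY[simp]: "dim_row YY = n" "dim_col YY = n" unfolding YY_def Ymat_def by simp_all
lemma dim_JJ[simp]: "dim_row JJ = n" "dim_col JJ = n" unfolding JJ_def by simp_all

lemma Y_entry: assumes "i < n" "j < n"
  shows "YY $$ (i,j) = (\<Sum>k<r. uu p q k i * uu p q k j / sz p q k)"
  unfolding YY_def Ymat_def using assms
  by (auto intro!: sum.cong simp: uu_def sg_def sz_def)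

lemma Y_sym: "i < n \<Longrightarrow> j < n \<Longrightarrow> YY $$ (j,i) = YY $$ (i,j)"
  by (simp add: Y_entry mult.commute)

lemma yv_eq: "yv r p q i = (\<Sum>k<r. uu p q k i * (real (p k) - real (q k)) / sz p q k)"
  unfolding yv_def by (intro sum.cong refl) (auto simp: uu_def sg_def sz_def)

lemma Y_rowsum: assumes i: "i < n" shows "(\<Sum>a<n. YY $$ (i,a)) = yv r p q i"
proof -
  have "(\<Sum>a<n. YY $$ (i,a)) = (\<Sum>a<n. \<Sum>k<r. uu p q k i / sz p q k * uu p q k a)"
    using i by (intro sum.cong refl) (simp add: Y_entry)
  also have "\<dots> = (\<Sum>k<r. uu p q k i / sz p q k * (\<Sum>a<n. uu p q k a))"
    by (subst sum.swap) (simp add: sum_distrib_left)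
  also have "\<dots> = yv r p q i" unfolding yv_eq by (intro sum.cong refl) (auto simp: sum_u)
  finally show ?thesis .
qed

lemma YY_idem: "YY * YY = YY"
proof (rule eq_matI)
  fix i j assume i: "i < dim_row YY" and j: "j < dim_col YY"
  then have i: "i < n" and j: "j < n" by auto
  have "(YY * YY) $$ (i,j) = (\<Sum>a<n. YY $$ (i,a) * YY $$ (a,j))"
    by (rule mult_entry[OF YY_carrier YY_carrier i j])
  also have "\<dots> = (\<Sum>a<n. \<Sum>k<r. \<Sum>k'<r. (uu p q k i / sz p q k * (uu p q k' j / sz p q k')) * (uu p q k a * uu p q k' a))"
  proof (intro sum.cong refl)
    fix a assume a: "a \<in> {..<n}"
    have "YY $$ (i,a) * YY $$ (a,j) = (\<Sum>k<r. uu p q k i * uu p q k a / sz p q k) * (\<Sum>k'<r. uu p q k' a * uu p q k' j / sz p q k')"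
      using a i j by (simp add: Y_entry)
    also have "\<dots> = (\<Sum>k<r. \<Sum>k'<r. (uu p q k i * uu p q k a / sz p q k) * (uu p q k' a * uu p q k' j / sz p q k'))"
      by (rule sum_product)
    also have "\<dots> = (\<Sum>k<r. \<Sum>k'<r. (uu p q k i / sz p q k * (uu p q k' j / sz p q k')) * (uu p q k a * uu p q k' a))"
      by (intro sum.cong refl) (simp add: field_simps)
    finally show "YY $$ (i,a) * YY $$ (a,j) = \<dots>" .
  qed
  also have "\<dots> = (\<Sum>k<r. \<Sum>a<n. \<Sum>k'<r. (uu p q k i / sz p q k * (uu p q k' j / sz p q k')) * (uu p q k a * uu p q k' a))"
    by (rule sum.swap)
  also have "\<dots> = (\<Sum>k<r. \<Sum>k'<r. \<Sum>a<n. (uu p q k i / sz p q k * (uu p q k' j / sz p q k')) * (uu p q k a * uu p q k' a))"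
    by (rule sum.cong[OF refl], rule sum.swap)
  also have "\<dots> = (\<Sum>k<r. \<Sum>k'<r. (uu p q k i / sz p q k * (uu p q k' j / sz p q k')) * (\<Sum>a<n. uu p q k a * uu p q k' a))"
    by (intro sum.cong refl) (rule sum_distrib_left[symmetric])
  also have "\<dots> = (\<Sum>k<r. \<Sum>k'<r. if k' = k then uu p q k i * uu p q k j / sz p q k else 0)"
  proof (intro sum.cong refl)
    fix k k' assume k: "k \<in> {..<r}" and k': "k' \<in> {..<r}"
    then have sp: "sz p q k > 0" using sz_pos by simp
    show "(uu p q k i / sz p q k * (uu p q k' j / sz p q k')) * (\<Sum>a<n. uu p q k a * uu p q k' a) = (if k' = k then uu p q k i * uu p q k j / sz p q k else 0)"
      using k k' sp by (simp add: ortho field_simps)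
  qed
  also have "\<dots> = YY $$ (i,j)" using i j by (simp add: Y_entry)
  finally show "(YY * YY) $$ (i,j) = YY $$ (i,j)" .
qed auto

lemma PY: "P * YY = 0\<^sub>m n n"
proof (rule eq_matI)
  fix i j assume "i < dim_row (0\<^sub>m n n :: real mat)" "j < dim_col (0\<^sub>m n n :: real mat)"
  then have i: "i < n" and j: "j < n" by auto
  have "(P * YY) $$ (i,j) = (\<Sum>a<n. P $$ (i,a) * YY $$ (a,j))"
    by (rule mult_entry[OF P_carrier YY_carrier i j])
  also have "\<dots> = (\<Sum>a<n. \<Sum>k<r. uu p q k j / sz p q k * (P $$ (i,a) * uu p q k a))"
  proof (intro sum.cong refl)
    fix a assume a: "a \<in> {..<n}"
    have "P $$ (i,a) * YY $$ (a,j) = (\<Sum>k<r. P $$ (i,a) * (uu p q k a * uu p q k j / sz p q k))"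
      using a j by (simp add: Y_entry sum_distrib_left)
    also have "\<dots> = (\<Sum>k<r. uu p q k j / sz p q k * (P $$ (i,a) * uu p q k a))"
      by (intro sum.cong refl) simp
    finally show "P $$ (i,a) * YY $$ (a,j) = \<dots>" .
  qed
  also have "\<dots> = (\<Sum>k<r. uu p q k j / sz p q k * (\<Sum>a<n. P $$ (i,a) * uu p q k a))"
    by (subst sum.swap) (simp add: sum_distrib_left)
  also have "\<dots> = 0" using i by (simp add: P_uu)
  finally show "(P * YY) $$ (i,j) = 0\<^sub>m n n $$ (i,j)" using i j by simp
qed auto

lemma YP: "YY * P = 0\<^sub>m n n"
proof (rule eq_matI)
  fix i j assume "i < dim_row (0\<^sub>m n n :: real mat)" "j < dim_col (0\<^sub>m n n :: real mat)"
  then have i: "i < n" and j: "j < n" by auto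
  have "(YY * P) $$ (i,j) = (\<Sum>a<n. YY $$ (i,a) * P $$ (a,j))"
    by (rule mult_entry[OF YY_carrier P_carrier i j])
  also have "\<dots> = (\<Sum>a<n. P $$ (j,a) * YY $$ (a,i))"
    using i j by (intro sum.cong refl) (auto simp: Y_sym P_sym)
  also have "\<dots> = (P * YY) $$ (j,i)" by (rule mult_entry[OF P_carrier YY_carrier j i, symmetric])
  also have "\<dots> = 0" using i j by (simp add: PY)
  finally show "(YY * P) $$ (i,j) = 0\<^sub>m n n $$ (i,j)" using i j by simp
qed auto

lemma YJY: "YY * JJ * YY = yyT n r p q"
proof (rule eq_matI)
  fix i j assume "i < dim_row (yyT n r p q)" "j < dim_col (yyT n r p q)"
  then have i: "i < n" and j: "j < n" by (auto simp: yyT_def)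
  have "(YY * JJ * YY) $$ (i,j) = (\<Sum>b<n. (YY * JJ) $$ (i,b) * YY $$ (b,j))"
    by (rule mult_entry[OF mult_carrier_mat[OF YY_carrier JJ_carrier] YY_carrier i j])
  also have "\<dots> = (\<Sum>b<n. yv r p q i * YY $$ (b,j))"
  proof (intro sum.cong refl)
    fix b assume b: "b \<in> {..<n}"
    have "(YY * JJ) $$ (i,b) = (\<Sum>a<n. YY $$ (i,a) * JJ $$ (a,b))"
      using b by (intro mult_entry[OF YY_carrier JJ_carrier i]) auto
    also have "\<dots> = (\<Sum>a<n. YY $$ (i,a))" using b by (intro sum.cong refl) (auto simp: JJ_def)
    finally show "(YY * JJ) $$ (i,b) * YY $$ (b,j) = yv r p q i * YY $$ (b,j)" using Y_rowsum[OF i] by simp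
  qed
  also have "\<dots> = (\<Sum>b<n. yv r p q i * YY $$ (j,b))"
  proof (intro sum.cong refl)
    fix b assume "b \<in> {..<n}"
    then show "yv r p q i * YY $$ (b,j) = yv r p q i * YY $$ (j,b)" using Y_sym[of b j] j by simp
  qed
  also have "\<dots> = yv r p q i * (\<Sum>b<n. YY $$ (j,b))"
    by (rule sum_distrib_left[symmetric])
  also have "\<dots> = yyT n r p q $$ (i,j)" using i j by (simp add: Y_rowsum yyT_def)
  finally show "(YY * JJ * YY) $$ (i,j) = yyT n r p q $$ (i,j)" .
qed (auto simp: yyT_def)

lemma gam_eq: "(\<Sum>a<n. yv r p q a) = gam r p q"
proof -
  have "(\<Sum>a<n. yv r p q a) = (\<Sum>a<n. \<Sum>k<r. (real (p k) - real (q k)) / sz p q k * uu p q k a)"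
    unfolding yv_eq by (intro sum.cong refl) (simp add: algebra_simps)
  also have "\<dots> = (\<Sum>k<r. (real (p k) - real (q k)) / sz p q k * (\<Sum>a<n. uu p q k a))"
    by (subst sum.swap) (simp add: sum_distrib_left)
  also have "\<dots> = gam r p q" unfolding gam_def
    by (intro sum.cong refl) (simp add: sum_u sz_def power2_eq_square)
  finally show ?thesis .
qed

lemma JYJ: "JJ * YY * JJ = gam r p q \<cdot>\<^sub>m JJ"
proof (rule eq_matI)
  fix i j assume "i < dim_row (gam r p q \<cdot>\<^sub>m JJ)" "j < dim_col (gam r p q \<cdot>\<^sub>m JJ)"
  then have i: "i < n" and j: "j < n" by (auto simp: JJ_def)
  have "(JJ * YY * JJ) $$ (i,j) = (\<Sum>b<n. (JJ * YY) $$ (i,b) * JJ $$ (b,j))"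
    by (rule mult_entry[OF mult_carrier_mat[OF JJ_carrier YY_carrier] JJ_carrier i j])
  also have "\<dots> = (\<Sum>b<n. yv r p q b)"
  proof (intro sum.cong refl)
    fix b assume b: "b \<in> {..<n}"
    have "(JJ * YY) $$ (i,b) = (\<Sum>a<n. JJ $$ (i,a) * YY $$ (a,b))"
      using b by (intro mult_entry[OF JJ_carrier YY_carrier i]) auto
    also have "\<dots> = (\<Sum>a<n. YY $$ (b,a))"
    proof (intro sum.cong refl)
      fix a assume "a \<in> {..<n}"
      then show "JJ $$ (i,a) * YY $$ (a,b) = YY $$ (b,a)" using Y_sym[of b a] b i by (simp add: JJ_def)
    qed
    finally show "(JJ * YY) $$ (i,b) * JJ $$ (b,j) = yv r p q b" using Y_rowsum b j by (simp add: JJ_def)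
  qed
  also have "\<dots> = (gam r p q \<cdot>\<^sub>m JJ) $$ (i,j)" using i j by (simp add: gam_eq JJ_def)
  finally show "(JJ * YY * JJ) $$ (i,j) = (gam r p q \<cdot>\<^sub>m JJ) $$ (i,j)" .
qed (auto simp: JJ_def)

lemma kernelY: assumes "qf n P x = 0" "i < n" shows "x i = (\<Sum>j<n. YY $$ (i,j) * x j)"
proof -
  have "(\<Sum>j<n. YY $$ (i,j) * x j) = (\<Sum>j<n. \<Sum>k<r. uu p q k i / sz p q k * (uu p q k j * x j))"
  proof (intro sum.cong refl)
    fix j assume j: "j \<in> {..<n}"
    have "YY $$ (i,j) * x j = (\<Sum>k<r. uu p q k i * uu p q k j / sz p q k * x j)"
      using j assms(2) by (simp add: Y_entry sum_distrib_right)
    also have "\<dots> = (\<Sum>k<r. uu p q k i / sz p q k * (uu p q k j * x j))"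
      by (intro sum.cong refl) simp
    finally show "YY $$ (i,j) * x j = \<dots>" .
  qed
  also have "\<dots> = (\<Sum>k<r. \<Sum>j<n. uu p q k i / sz p q k * (uu p q k j * x j))"
    by (rule sum.swap)
  also have "\<dots> = (\<Sum>k<r. uu p q k i * (\<Sum>a<n. uu p q k a * x a) / sz p q k)"
    by (intro sum.cong refl) (simp add: sum_distrib_left sum_divide_distrib)
  finally show ?thesis using kernel[OF assms] by simp
qed

lemma qfY: "qf n YY x = (\<Sum>k<r. (\<Sum>a<n. uu p q k a * x a)^2 / sz p q k)"
proof -
  have "qf n YY x = (\<Sum>i<n. \<Sum>j<n. \<Sum>k<r. (uu p q k i * x i) * (uu p q k j * x j) / sz p q k)"
    unfolding qf_def
  proof (intro sum.cong refl)
    fix i j assume i: "i \<in> {..<n}" and j: "j \<in> {..<n}"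
    have "YY $$ (i,j) * x i * x j = (\<Sum>k<r. uu p q k i * uu p q k j / sz p q k * (x i * x j))"
      using i j by (simp add: Y_entry sum_distrib_right mult.assoc)
    also have "\<dots> = (\<Sum>k<r. (uu p q k i * x i) * (uu p q k j * x j) / sz p q k)"
      by (intro sum.cong refl) simp
    finally show "YY $$ (i,j) * x i * x j = \<dots>" .
  qed
  also have "\<dots> = (\<Sum>i<n. \<Sum>k<r. \<Sum>j<n. (uu p q k i * x i) * (uu p q k j * x j) / sz p q k)"
    by (rule sum.cong[OF refl], rule sum.swap)
  also have "\<dots> = (\<Sum>k<r. \<Sum>i<n. \<Sum>j<n. (uu p q k i * x i) * (uu p q k j * x j) / sz p q k)"
    by (rule sum.swap)
  also have "\<dots> = (\<Sum>k<r. (\<Sum>i<n. \<Sum>j<n. (uu p q k i * x i) * (uu p q k j * x j)) / sz p q k)"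
    by (intro sum.cong refl) (simp add: sum_divide_distrib)
  also have "\<dots> = (\<Sum>k<r. (\<Sum>a<n. uu p q k a * x a)^2 / sz p q k)"
    by (simp add: power2_eq_square sum_product)
  finally show ?thesis .
qed

lemma Yx_eq: assumes i: "i < n"
  shows "(\<Sum>j<n. YY $$ (i,j) * x j) = (\<Sum>k<r. uu p q k i * (\<Sum>a<n. uu p q k a * x a) / sz p q k)"
proof -
  have "(\<Sum>j<n. YY $$ (i,j) * x j) = (\<Sum>j<n. \<Sum>k<r. uu p q k i / sz p q k * (uu p q k j * x j))"
  proof (intro sum.cong refl)
    fix j assume j: "j \<in> {..<n}"
    have "YY $$ (i,j) * x j = (\<Sum>k<r. uu p q k i * uu p q k j / sz p q k * x j)"
      using j i by (simp add: Y_entry sum_distrib_right)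
    also have "\<dots> = (\<Sum>k<r. uu p q k i / sz p q k * (uu p q k j * x j))"
      by (intro sum.cong refl) simp
    finally show "YY $$ (i,j) * x j = \<dots>" .
  qed
  also have "\<dots> = (\<Sum>k<r. \<Sum>j<n. uu p q k i / sz p q k * (uu p q k j * x j))"
    by (rule sum.swap)
  also have "\<dots> = (\<Sum>k<r. uu p q k i * (\<Sum>a<n. uu p q k a * x a) / sz p q k)"
    by (intro sum.cong refl) (simp add: sum_distrib_left sum_divide_distrib)
  finally show ?thesis .
qed

lemma qfY_nonneg: "qf n YY x \<ge> 0"
  unfolding qfY using sz_pos by (intro sum_nonneg) (simp add: less_imp_le)

lemma Pp_inv: "\<exists>Q. (P + YY) * Q = 1\<^sub>m n \<and> Q \<in> carrier_mat n n"
proof -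
  have c: "P + YY \<in> carrier_mat n n" using P_carrier by simp
  have "\<exists>B. mat_inverse (P + YY) = Some B \<and> (P + YY) * B = 1\<^sub>m n \<and> B * (P + YY) = 1\<^sub>m n \<and> B \<in> carrier_mat n n"
  proof (rule inv_exists[OF c])
    fix x assume h: "\<And>i. i < n \<Longrightarrow> (\<Sum>j<n. (P + YY) $$ (i,j) * x j) = 0"
    have "qf n (P + YY) x = 0" unfolding qf_mult[OF c] using h by simp
    then have s: "qf n P x + qf n YY x = 0" using qf_add[OF P_carrier YY_carrier] by simp
    have qP: "qf n P x = 0" and qY: "qf n YY x = 0" using s qf_P_nonneg[of x] qfY_nonneg[of x] by linarith+
    have uz: "(\<Sum>a<n. uu p q k a * x a) = 0" if k: "k < r" for k
    proof -
      have t: "\<forall>k\<in>{..<r}. 0 \<le> (\<Sum>a<n. uu p q k a * x a)^2 / sz p q k"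
        using sz_pos by (simp add: less_imp_le)
      have "(\<Sum>a<n. uu p q k a * x a)^2 / sz p q k = 0"
        using qY[unfolded qfY] sum_nonneg_eq_0_iff[of "{..<r}" "\<lambda>k. (\<Sum>a<n. uu p q k a * x a)^2 / sz p q k"] t k
        by auto
      then show ?thesis using sz_pos[OF k] by simp
    qed
    fix i assume i: "i < n"
    have "x i = (\<Sum>j<n. YY $$ (i,j) * x j)" by (rule kernelY[OF qP i])
    also have "\<dots> = 0" unfolding Yx_eq[OF i] using uz by simp
    finally show "x i = 0" .
  qed
  then show ?thesis by blast
qed

lemma gam_nonneg: "gam r p q \<ge> 0"
  unfolding gam_def by (intro sum_nonneg) simp

lemma main:
  fixes \<alpha> l :: real
  assumes a: "\<alpha> > 0" and l: "l > 0"
  defines "S \<equiv> \<alpha> \<cdot>\<^sub>m 1\<^sub>m n + l \<cdot>\<^sub>m mat n n (\<lambda>_. 1)"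
    and "N \<equiv> (1 / \<alpha>) \<cdot>\<^sub>m Ymat n r p q
              - (l / (\<alpha> * (\<alpha> + l * gam r p q))) \<cdot>\<^sub>m yyT n r p q"
  shows "(\<forall>\<^sub>F t in at_top. mat_inverse (S + t \<cdot>\<^sub>m P) \<noteq> None) \<and>
         (\<forall>i<n. \<forall>j<n. ((\<lambda>t. the (mat_inverse (S + t \<cdot>\<^sub>m P)) $$ (i,j))
                        \<longlongrightarrow> N $$ (i,j)) at_top)"
proof -
  define \<gamma> where "\<gamma> = gam r p q"
  define c where "c = l / (\<alpha> * (\<alpha> + l * \<gamma>))"
  define Z where "Z = YY * JJ * YY"
  have g0: "\<gamma> \<ge> 0" unfolding \<gamma>_def by (rule gam_nonneg)
  have alg: "\<alpha> + l * \<gamma> > 0" using a l g0 by (simp add: add_pos_nonneg)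
  have Xn: "\<alpha> + l * \<gamma> \<noteq> 0" using alg by simp
  have ceq: "c * (\<alpha> + l * \<gamma>) = l / \<alpha>" unfolding c_def using Xn by simp
  have cY: "YY \<in> carrier_mat n n" and cJ: "JJ \<in> carrier_mat n n" and cP: "P \<in> carrier_mat n n"
    using P_carrier by auto
  have cZ: "Z \<in> carrier_mat n n" unfolding Z_def by (rule mult_carrier_mat[OF mult_carrier_mat[OF cY cJ] cY])
  have cJY: "JJ * YY \<in> carrier_mat n n" by (rule mult_carrier_mat[OF cJ cY])
  have cYJ: "YY * JJ \<in> carrier_mat n n" by (rule mult_carrier_mat[OF cY cJ])
  have S: "S = \<alpha> \<cdot>\<^sub>m 1\<^sub>m n + l \<cdot>\<^sub>m JJ" unfolding S_def JJ_def ..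
  have N: "N = (1 / \<alpha>) \<cdot>\<^sub>m YY - c \<cdot>\<^sub>m Z" unfolding N_def YY_def Z_def c_def \<gamma>_def YJY[unfolded YY_def] ..
  have cS: "S \<in> carrier_mat n n" unfolding S using cJ by simp
  have cN: "N \<in> carrier_mat n n" unfolding N using cY cZ by (simp add: minus_carrier_mat)
  have Zassoc: "Z = YY * (JJ * YY)" unfolding Z_def by (rule assoc_mult_mat[OF cY cJ cY])
  have PZ: "P * Z = 0\<^sub>m n n"
  proof -
    have "P * Z = (P * YY) * (JJ * YY)" unfolding Zassoc by (rule assoc_mult_mat[OF cP cY cJY, symmetric])
    also have "\<dots> = 0\<^sub>m n n" unfolding PY using cJY by (simp add: left_mult_zero_mat)
    finally show ?thesis .
  qed
  have PN: "P * N = 0\<^sub>m n n"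
  proof -
    have "P * N = P * ((1 / \<alpha>) \<cdot>\<^sub>m YY) - P * (c \<cdot>\<^sub>m Z)"
      unfolding N by (rule mult_minus_distrib_mat[OF cP]) (use cY cZ in auto)
    also have "\<dots> = (1 / \<alpha>) \<cdot>\<^sub>m (P * YY) - c \<cdot>\<^sub>m (P * Z)"
      using mult_smult_distrib[OF cP cY] mult_smult_distrib[OF cP cZ] by simp
    also have "\<dots> = 0\<^sub>m n n" unfolding PY PZ by (intro eq_matI) auto
    finally show ?thesis .
  qed
  have YZ: "YY * Z = Z"
  proof -
    have "YY * Z = (YY * YY) * (JJ * YY)" unfolding Zassoc by (rule assoc_mult_mat[OF cY cY cJY, symmetric])
    then show ?thesis unfolding YY_idem Zassoc .
  qed
  have JZ: "JJ * Z = \<gamma> \<cdot>\<^sub>m (JJ * YY)"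
  proof -
    have "JJ * Z = (JJ * YY) * (JJ * YY)" unfolding Zassoc by (rule assoc_mult_mat[OF cJ cY cJY, symmetric])
    also have "\<dots> = (JJ * YY * JJ) * YY" using assoc_mult_mat[OF cJY cJ cY] by simp
    also have "\<dots> = (\<gamma> \<cdot>\<^sub>m JJ) * YY" unfolding JYJ \<gamma>_def ..
    also have "\<dots> = \<gamma> \<cdot>\<^sub>m (JJ * YY)" by (rule mult_smult_assoc_mat[OF cJ cY])
    finally show ?thesis .
  qed
  have YJZ: "(YY * JJ) * Z = \<gamma> \<cdot>\<^sub>m Z"
  proof -
    have "(YY * JJ) * Z = YY * (JJ * Z)" by (rule assoc_mult_mat[OF cY cJ cZ])
    also have "\<dots> = \<gamma> \<cdot>\<^sub>m (YY * (JJ * YY))" unfolding JZ by (rule mult_smult_distrib[OF cY cJY])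
    finally show ?thesis unfolding Zassoc .
  qed
  have YN: "YY * N = (1 / \<alpha>) \<cdot>\<^sub>m YY - c \<cdot>\<^sub>m Z"
  proof -
    have "YY * N = YY * ((1 / \<alpha>) \<cdot>\<^sub>m YY) - YY * (c \<cdot>\<^sub>m Z)"
      unfolding N by (rule mult_minus_distrib_mat[OF cY]) (use cY cZ in auto)
    also have "\<dots> = (1 / \<alpha>) \<cdot>\<^sub>m (YY * YY) - c \<cdot>\<^sub>m (YY * Z)"
      using mult_smult_distrib[OF cY cY] mult_smult_distrib[OF cY cZ] by simp
    finally show ?thesis unfolding YY_idem YZ .
  qed
  have YJN: "(YY * JJ) * N = (1 / \<alpha>) \<cdot>\<^sub>m Z - (c * \<gamma>) \<cdot>\<^sub>m Z"
  proof -
    have "(YY * JJ) * N = (YY * JJ) * ((1 / \<alpha>) \<cdot>\<^sub>m YY) - (YY * JJ) * (c \<cdot>\<^sub>m Z)"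
      unfolding N by (rule mult_minus_distrib_mat[OF cYJ]) (use cY cZ in auto)
    also have "\<dots> = (1 / \<alpha>) \<cdot>\<^sub>m ((YY * JJ) * YY) - c \<cdot>\<^sub>m ((YY * JJ) * Z)"
      using mult_smult_distrib[OF cYJ cY] mult_smult_distrib[OF cYJ cZ] by simp
    also have "\<dots> = (1 / \<alpha>) \<cdot>\<^sub>m Z - (c * \<gamma>) \<cdot>\<^sub>m Z"
      unfolding YJZ Z_def[symmetric] by (intro eq_matI) (use cZ in auto)
    finally show ?thesis .
  qed
  have YS: "YY * S = \<alpha> \<cdot>\<^sub>m YY + l \<cdot>\<^sub>m (YY * JJ)"
  proof -
    have "YY * S = YY * (\<alpha> \<cdot>\<^sub>m 1\<^sub>m n) + YY * (l \<cdot>\<^sub>m JJ)"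
      unfolding S by (rule mult_add_distrib_mat[OF cY]) (use cJ in auto)
    also have "\<dots> = \<alpha> \<cdot>\<^sub>m (YY * 1\<^sub>m n) + l \<cdot>\<^sub>m (YY * JJ)"
      using mult_smult_distrib[OF cY one_carrier_mat] mult_smult_distrib[OF cY cJ] by simp
    finally show ?thesis using cY by simp
  qed
  have YSN: "YY * (S * N) = YY"
  proof -
    have "YY * (S * N) = (YY * S) * N" by (rule assoc_mult_mat[OF cY cS cN, symmetric])
    also have "\<dots> = (\<alpha> \<cdot>\<^sub>m YY) * N + (l \<cdot>\<^sub>m (YY * JJ)) * N"
      unfolding YS by (rule add_mult_distrib_mat) (use cY cYJ cN in auto)
    also have "\<dots> = \<alpha> \<cdot>\<^sub>m (YY * N) + l \<cdot>\<^sub>m ((YY * JJ) * N)"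
      using mult_smult_assoc_mat[OF cY cN] mult_smult_assoc_mat[OF cYJ cN] by simp
    also have "\<dots> = \<alpha> \<cdot>\<^sub>m ((1 / \<alpha>) \<cdot>\<^sub>m YY - c \<cdot>\<^sub>m Z) + l \<cdot>\<^sub>m ((1 / \<alpha>) \<cdot>\<^sub>m Z - (c * \<gamma>) \<cdot>\<^sub>m Z)"
      unfolding YN YJN ..
    also have "\<dots> = YY"
    proof (rule eq_matI)
      fix i j assume "i < dim_row YY" "j < dim_col YY"
      then have i: "i < n" and j: "j < n" by auto
      have "\<alpha> * ((1 / \<alpha>) * YY $$ (i,j) - c * Z $$ (i,j)) + l * ((1 / \<alpha>) * Z $$ (i,j) - (c * \<gamma>) * Z $$ (i,j))
          = YY $$ (i,j) + (l / \<alpha> - c * (\<alpha> + l * \<gamma>)) * Z $$ (i,j)"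
        using a by (simp add: field_simps)
      also have "\<dots> = YY $$ (i,j)" using ceq by simp
      finally show "(\<alpha> \<cdot>\<^sub>m ((1 / \<alpha>) \<cdot>\<^sub>m YY - c \<cdot>\<^sub>m Z) + l \<cdot>\<^sub>m ((1 / \<alpha>) \<cdot>\<^sub>m Z - (c * \<gamma>) \<cdot>\<^sub>m Z)) $$ (i,j) = YY $$ (i,j)"
        using i j cZ by simp
    qed (use cZ in auto)
    finally show ?thesis .
  qed
  define U where "U = 1\<^sub>m n - S * N"
  have cSN: "S * N \<in> carrier_mat n n" by (rule mult_carrier_mat[OF cS cN])
  have cU: "U \<in> carrier_mat n n" unfolding U_def using cSN by (simp add: minus_carrier_mat)
  have YU: "YY * U = 0\<^sub>m n n"
  proof -
    have "YY * U = YY * 1\<^sub>m n - YY * (S * N)" unfolding U_def by (rule mult_minus_distrib_mat[OF cY one_carrier_mat cSN])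
    also have "\<dots> = 0\<^sub>m n n" unfolding YSN using cY by (intro eq_matI) auto
    finally show ?thesis .
  qed
  obtain Q where Q: "(P + YY) * Q = 1\<^sub>m n" "Q \<in> carrier_mat n n" using Pp_inv by blast
  define W where "W = Q * U"
  have cPY: "P + YY \<in> carrier_mat n n" using cY by simp
  have cW: "W \<in> carrier_mat n n" unfolding W_def by (rule mult_carrier_mat[OF Q(2) cU])
  have cPW: "P * W \<in> carrier_mat n n" by (rule mult_carrier_mat[OF cP cW])
  have cYW: "YY * W \<in> carrier_mat n n" by (rule mult_carrier_mat[OF cY cW])
  have sumW: "P * W + YY * W = U"
  proof -
    have "P * W + YY * W = (P + YY) * W" by (rule add_mult_distrib_mat[OF cP cY cW, symmetric])
    also have "\<dots> = ((P + YY) * Q) * U" unfolding W_def by (rule assoc_mult_mat[OF cPY Q(2) cU, symmetric])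
    also have "\<dots> = U" unfolding Q(1) using cU by simp
    finally show ?thesis .
  qed
  have YW: "YY * W = 0\<^sub>m n n"
  proof -
    have "YY * (P * W) = (YY * P) * W" by (rule assoc_mult_mat[OF cY cP cW, symmetric])
    also have "\<dots> = 0\<^sub>m n n" unfolding YP using cW by (simp add: left_mult_zero_mat)
    finally have a1: "YY * (P * W) = 0\<^sub>m n n" .
    have a2: "YY * (YY * W) = YY * W" using assoc_mult_mat[OF cY cY cW] YY_idem by simp
    have "YY * U = YY * (P * W) + YY * (YY * W)" unfolding sumW[symmetric] by (rule mult_add_distrib_mat[OF cY cPW cYW])
    then have "0\<^sub>m n n = 0\<^sub>m n n + YY * W" unfolding YU a1 a2 .
    then show ?thesis using cYW by simp
  qed
  have PW: "P * W = U" using sumW cPW unfolding YW by simp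
  define M where "M t = S + t \<cdot>\<^sub>m P" for t
  have cM: "M t \<in> carrier_mat n n" for t unfolding M_def using cS cP by simp
  have pdM: "qf n (M t) x \<ge> \<alpha> * (\<Sum>i<n. (x i)^2)" if t: "t \<ge> 0" for t x
  proof -
    have "qf n (M t) x = \<alpha> * (\<Sum>i<n. (x i)^2) + l * (\<Sum>i<n. x i)^2 + t * qf n P x"
      unfolding M_def S_def using cP
      by (simp add: qf_add qf_smult qf_one qf_J)
    moreover have "l * (\<Sum>i<n. x i)^2 \<ge> 0" using l by simp
    moreover have "t * qf n P x \<ge> 0" using t qf_P_nonneg by simp
    ultimately show ?thesis by linarith
  qed
  have inv: "\<exists>B. mat_inverse (M t) = Some B \<and> M t * B = 1\<^sub>m n \<and> B * M t = 1\<^sub>m n \<and> B \<in> carrier_mat n n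
            \<and> (\<forall>i<n. \<forall>j<n. \<bar>B $$ (i,j)\<bar> \<le> 1 / \<alpha>)" if t: "t \<ge> 0" for t
    by (rule pd_inverse[OF cM a pdM[OF t]])
  have ev1: "\<forall>\<^sub>F t in at_top. mat_inverse (S + t \<cdot>\<^sub>m P) \<noteq> None"
  proof -
    have "mat_inverse (M t) \<noteq> None" if "t \<ge> 0" for t using inv[OF that] by auto
    then show ?thesis unfolding M_def using eventually_ge_at_top[of "0::real"] by (rule eventually_mono[rotated]) 
  qed
  have key: "t * (the (mat_inverse (M t)) $$ (i,j) - N $$ (i,j)) = W $$ (i,j) - (the (mat_inverse (M t)) * (S * W)) $$ (i,j)"
    if t: "t > 0" and i: "i < n" and j: "j < n" for t i j
  proof -
    obtain B where B: "mat_inverse (M t) = Some B" "M t * B = 1\<^sub>m n" "B * M t = 1\<^sub>m n" "B \<in> carrier_mat n n"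
      using inv[of t] t by auto
    have MN: "M t * N = S * N"
    proof -
      have "M t * N = S * N + (t \<cdot>\<^sub>m P) * N" unfolding M_def by (rule add_mult_distrib_mat) (use cS cP cN in auto)
      also have "(t \<cdot>\<^sub>m P) * N = t \<cdot>\<^sub>m (P * N)" by (rule mult_smult_assoc_mat[OF cP cN])
      finally show ?thesis unfolding PN using cSN by simp
    qed
    have BSN: "B * (S * N) = N"
    proof -
      have "B * (S * N) = (B * M t) * N" unfolding MN[symmetric] by (rule assoc_mult_mat[OF B(4) cM cN, symmetric])
      then show ?thesis unfolding B(3) using cN by simp
    qed
    have BU: "B * U = B - N"
    proof -
      have "B * U = B * 1\<^sub>m n - B * (S * N)" unfolding U_def by (rule mult_minus_distrib_mat[OF B(4) one_carrier_mat cSN])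
      then show ?thesis unfolding BSN using B(4) by simp
    qed
    have BM: "B * S + t \<cdot>\<^sub>m (B * P) = 1\<^sub>m n"
    proof -
      have "B * M t = B * S + B * (t \<cdot>\<^sub>m P)" unfolding M_def by (rule mult_add_distrib_mat[OF B(4)]) (use cS cP in auto)
      then show ?thesis unfolding B(3) mult_smult_distrib[OF B(4) cP] by simp
    qed
    have cBP: "B * P \<in> carrier_mat n n" by (rule mult_carrier_mat[OF B(4) cP])
    have cBS: "B * S \<in> carrier_mat n n" by (rule mult_carrier_mat[OF B(4) cS])
    have "t \<cdot>\<^sub>m (B - N) = t \<cdot>\<^sub>m ((B * P) * W)"
      unfolding BU[symmetric] PW[symmetric] using assoc_mult_mat[OF B(4) cP cW] by simp
    also have "\<dots> = (t \<cdot>\<^sub>m (B * P)) * W" by (rule mult_smult_assoc_mat[OF cBP cW, symmetric])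
    also have "t \<cdot>\<^sub>m (B * P) = 1\<^sub>m n - B * S"
      by (rule mat_eq_sub[OF cBS _ BM]) (use cBP in simp)
    also have "(1\<^sub>m n - B * S) * W = W - (B * S) * W"
      using minus_mult_distrib_mat[OF one_carrier_mat cBS cW] cW by simp
    also have "(B * S) * W = B * (S * W)" by (rule assoc_mult_mat[OF B(4) cS cW])
    finally have E: "t \<cdot>\<^sub>m (B - N) = W - B * (S * W)" .
    have "(t \<cdot>\<^sub>m (B - N)) $$ (i,j) = t * (B $$ (i,j) - N $$ (i,j))" using B(4) cN i j by simp
    moreover have "(W - B * (S * W)) $$ (i,j) = W $$ (i,j) - (B * (S * W)) $$ (i,j)" using B(4) cW cS i j by simp
    ultimately show ?thesis using E B(1) by simp
  qed
  have lim: "((\<lambda>t. the (mat_inverse (S + t \<cdot>\<^sub>m P)) $$ (i,j)) \<longlongrightarrow> N $$ (i,j)) at_top"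
    if i: "i < n" and j: "j < n" for i j
  proof -
    define SW where "SW = S * W"
    have cSW: "SW \<in> carrier_mat n n" unfolding SW_def by (rule mult_carrier_mat[OF cS cW])
    define K where "K = \<bar>W $$ (i,j)\<bar> + (\<Sum>a<n. 1 / \<alpha> * \<bar>SW $$ (a,j)\<bar>)"
    define f where "f t = the (mat_inverse (M t)) $$ (i,j)" for t
    have bound: "\<bar>f t - N $$ (i,j)\<bar> \<le> K / t" if t: "t > 0" for t
    proof -
      obtain B where B: "mat_inverse (M t) = Some B" "M t * B = 1\<^sub>m n" "B * M t = 1\<^sub>m n" "B \<in> carrier_mat n n"
        "\<forall>i<n. \<forall>j<n. \<bar>B $$ (i,j)\<bar> \<le> 1 / \<alpha>"
        using inv[of t] t by auto
      have BSW: "\<bar>(B * SW) $$ (i,j)\<bar> \<le> (\<Sum>a<n. 1 / \<alpha> * \<bar>SW $$ (a,j)\<bar>)"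
      proof -
        have "(B * SW) $$ (i,j) = (\<Sum>a<n. B $$ (i,a) * SW $$ (a,j))" by (rule mult_entry[OF B(4) cSW i j])
        also have "\<bar>\<dots>\<bar> \<le> (\<Sum>a<n. \<bar>B $$ (i,a) * SW $$ (a,j)\<bar>)" by (rule sum_abs)
        also have "\<dots> \<le> (\<Sum>a<n. 1 / \<alpha> * \<bar>SW $$ (a,j)\<bar>)"
        proof (intro sum_mono)
          fix a assume a: "a \<in> {..<n}"
          have "\<bar>B $$ (i,a)\<bar> \<le> 1 / \<alpha>" using B(5) i a by simp
          then have "\<bar>B $$ (i,a)\<bar> * \<bar>SW $$ (a,j)\<bar> \<le> 1 / \<alpha> * \<bar>SW $$ (a,j)\<bar>"
            by (rule mult_right_mono) simp
          then show "\<bar>B $$ (i,a) * SW $$ (a,j)\<bar> \<le> 1 / \<alpha> * \<bar>SW $$ (a,j)\<bar>" by (simp add: abs_mult)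
        qed
        finally show ?thesis .
      qed
      have "t * (f t - N $$ (i,j)) = W $$ (i,j) - (B * SW) $$ (i,j)"
        using key[OF t i j] B(1) unfolding f_def SW_def by simp
      then have "\<bar>t * (f t - N $$ (i,j))\<bar> = \<bar>W $$ (i,j) - (B * SW) $$ (i,j)\<bar>" by simp
      then have "t * \<bar>f t - N $$ (i,j)\<bar> = \<bar>W $$ (i,j) - (B * SW) $$ (i,j)\<bar>" using t by (simp add: abs_mult)
      also have "\<dots> \<le> \<bar>W $$ (i,j)\<bar> + \<bar>(B * SW) $$ (i,j)\<bar>" by (rule abs_triangle_ineq4)
      also have "\<dots> \<le> K" unfolding K_def using BSW by simp
      finally have "\<bar>f t - N $$ (i,j)\<bar> * t \<le> K" by (simp add: mult.commute)
      then show ?thesis using t by (simp add: pos_le_divide_eq)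
    qed
    have K0: "((\<lambda>t. K / t) \<longlongrightarrow> 0) at_top"
      by (rule tendsto_divide_0[OF tendsto_const filterlim_at_top_imp_at_infinity[OF filterlim_ident]])
    have lo: "((\<lambda>t. N $$ (i,j) - K / t) \<longlongrightarrow> N $$ (i,j)) at_top"
      using tendsto_diff[OF tendsto_const K0] by simp
    have hi: "((\<lambda>t. N $$ (i,j) + K / t) \<longlongrightarrow> N $$ (i,j)) at_top"
      using tendsto_add[OF tendsto_const K0] by simp
    have "(f \<longlongrightarrow> N $$ (i,j)) at_top"
    proof (rule tendsto_sandwich[OF _ _ lo hi])
      show "\<forall>\<^sub>F t in at_top. N $$ (i,j) - K / t \<le> f t"
        using eventually_gt_at_top[of "0::real"] by eventually_elim (use bound in \<open>force simp: abs_le_iff\<close>)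
      show "\<forall>\<^sub>F t in at_top. f t \<le> N $$ (i,j) + K / t"
        using eventually_gt_at_top[of "0::real"] by eventually_elim (use bound in \<open>force simp: abs_le_iff\<close>)
    qed
    then show ?thesis unfolding f_def M_def .
  qed
  show ?thesis using ev1 lim by blast
qed

end


theorem proposition4p8:
  fixes n r :: nat and l \<alpha> :: real and P :: "real mat" and p q :: "nat \<Rightarrow> nat"
  assumes "n \<ge> 3" and "l > 0" and "\<alpha> \<ge> (real n - 2) * l"
    and "signless_laplacian n P"
    and "bip_labelled n P r p q"
  defines "S \<equiv> \<alpha> \<cdot>\<^sub>m 1\<^sub>m n + l \<cdot>\<^sub>m mat n n (\<lambda>_. 1)"
    and "N \<equiv> (1 / \<alpha>) \<cdot>\<^sub>m Ymat n r p q
              - (l / (\<alpha> * (\<alpha> + l * gam r p q))) \<cdot>\<^sub>m yyT n r p q"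
  shows "(\<forall>\<^sub>F t in at_top. mat_inverse (S + t \<cdot>\<^sub>m P) \<noteq> None) \<and>
         (\<forall>i<n. \<forall>j<n. ((\<lambda>t. the (mat_inverse (S + t \<cdot>\<^sub>m P)) $$ (i,j))
                        \<longlongrightarrow> N $$ (i,j)) at_top)"
proof -
  interpret setting n r P p q using assms(4,5) by unfold_locales
  have "real n - 2 \<ge> 1" using assms(1) by simp
  then have "(real n - 2) * l \<ge> 1 * l" using assms(2) by (intro mult_right_mono) auto
  then have a: "\<alpha> > 0" using assms(2,3) by linarith
  show ?thesis unfolding S_def N_def by (rule main[OF a assms(2)])
qed

end
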